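(* Fix a goal $s_g$ and a policy $\pi$, and let $f:\mathcal{S}\to\mathbb{R}$. Suppose that from every state, trajectories generated by $\pi$ reach $s_g$ in finite time with probability one, and that $f$ is $L$-bounded in expected transitions, i.e. $$\sup_{s\in\mathcal{S}}\ \mathop{\mathbb{E}}_{a\sim\pi(\cdot\mid s,s_g),\ s'\sim P(\cdot\mid s,a,s_g)}\big[\,|f(s')-f(s)|\,\big]\le L.$$ Then $f$ is $L$-Lipschitz, i.e. $|f(s_g)-f(s_0)|\le L\, d^\pi_T(s_0,s_g)$ for all $s_0\in\mathcal{S}$.
   Context: Setting: a goal-conditioned MDP with discrete state space $\mathcal{S}$, actions $\mathcal{A}$, goal-dependent transition kernel $P(\cdot\mid s,a,s_g)$ and policy $\pi(\cdot\mid s,s_g)$. $T(s_g\mid\pi,s)$ denotes the first time-step at which $s_g$ is encountered when starting at $s$ and following $\pi$, and $d^\pi_T(s,s_g):=\mathbb{E}[T(s_g\mid\pi,s)]$ is the time-step quasimetric. For a fixed goal $s_g$, $f$ is called $L$-Lipschitz if $|f(s_g)-f(s_0)|\le L\,d^\pi_T(s_0,s_g)$ for all $s_0\in\mathcal{S}$. *)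

theory Defs
  imports "HOL-Probability.Probability"
begin

definition step_kernel ::
  "('s \<Rightarrow> 'a \<Rightarrow> 's \<Rightarrow> 's pmf) \<Rightarrow> ('s \<Rightarrow> 's \<Rightarrow> 'a pmf) \<Rightarrow> 's \<Rightarrow> 's \<Rightarrow> 's pmf" where
  "step_kernel P pol sg s = bind_pmf (pol s sg) (\<lambda>a. P s a sg)"

text \<open>hit_prob P pol sg n s = Pr[T(sg | pol, s) = n]: probability that the trajectory started at s
  (time 0) first encounters sg at time step n.\<close>
fun hit_prob ::
  "('s \<Rightarrow> 'a \<Rightarrow> 's \<Rightarrow> 's pmf) \<Rightarrow> ('s \<Rightarrow> 's \<Rightarrow> 'a pmf) \<Rightarrow> 's \<Rightarrow> nat \<Rightarrow> 's \<Rightarrow> ennreal" where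
  "hit_prob P pol sg 0 s = (if s = sg then 1 else 0)"
| "hit_prob P pol sg (Suc n) s =
     (if s = sg then 0 else \<integral>\<^sup>+ s'. hit_prob P pol sg n s' \<partial>measure_pmf (step_kernel P pol sg s))"

definition reach_prob ::
  "('s \<Rightarrow> 'a \<Rightarrow> 's \<Rightarrow> 's pmf) \<Rightarrow> ('s \<Rightarrow> 's \<Rightarrow> 'a pmf) \<Rightarrow> 's \<Rightarrow> 's \<Rightarrow> ennreal" where
  "reach_prob P pol sg s = (\<Sum>n. hit_prob P pol sg n s)"

text \<open>Time-step quasimetric d_T(s, sg) = E[T(sg | pol, s)] in [0, infinity]
  (T = infinity contributes infinity if it has positive probability).\<close>
definition dT ::
  "('s \<Rightarrow> 'a \<Rightarrow> 's \<Rightarrow> 's pmf) \<Rightarrow> ('s \<Rightarrow> 's \<Rightarrow> 'a pmf) \<Rightarrow> 's \<Rightarrow> 's \<Rightarrow> ennreal" where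
  "dT P pol s sg =
     (\<Sum>n. of_nat n * hit_prob P pol sg n s)
     + (if reach_prob P pol sg s < 1 then \<infinity> else 0)"

end

theory Submission
  imports Defs
begin

fun uacc :: "('s \<Rightarrow> 'a \<Rightarrow> 's \<Rightarrow> 's pmf) \<Rightarrow> ('s \<Rightarrow> 's \<Rightarrow> 'a pmf) \<Rightarrow> 's \<Rightarrow> ('s \<Rightarrow> real) \<Rightarrow> nat \<Rightarrow> 's \<Rightarrow> ennreal" where
  "uacc P pol sg f 0 s = 0"
| "uacc P pol sg f (Suc N) s = (if s = sg then 0 else
     \<integral>\<^sup>+ s'. (ennreal \<bar>f s' - f s\<bar> + uacc P pol sg f N s') \<partial>measure_pmf (step_kernel P pol sg s))"

lemma hit_le_reach: "(\<Sum>n<N. hit_prob P pol sg n s) \<le> reach_prob P pol sg s"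
  unfolding reach_prob_def by (rule sum_le_suminf) (auto intro: summableI)

lemma PN_step:
  assumes "s \<noteq> sg"
  shows "(\<Sum>n<Suc N. hit_prob P pol sg n s) =
    \<integral>\<^sup>+ s'. (\<Sum>n<N. hit_prob P pol sg n s') \<partial>measure_pmf (step_kernel P pol sg s)"
  using assms by (simp add: sum.lessThan_Suc_shift nn_integral_sum del: sum.lessThan_Suc)

lemma lemA:
  assumes reach: "\<And>s. reach_prob P pol sg s = 1"
  shows "ennreal \<bar>f sg - f s\<bar> * (\<Sum>n<N. hit_prob P pol sg n s) \<le> uacc P pol sg f N s"
proof (induction N arbitrary: s)
  case 0
  then show ?case by simp
next
  case (Suc N)
  show ?case
  proof (cases "s = sg")
    case True
    then show ?thesis by simp
  next
    case False
    let ?K = "measure_pmf (step_kernel P pol sg s)"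
    let ?p = "\<lambda>s'. (\<Sum>n<N. hit_prob P pol sg n s')"
    have "ennreal \<bar>f sg - f s\<bar> * (\<Sum>n<Suc N. hit_prob P pol sg n s)
        = \<integral>\<^sup>+ s'. ennreal \<bar>f sg - f s\<bar> * ?p s' \<partial>?K"
      by (subst PN_step[OF False]) (simp add: nn_integral_cmult)
    also have "\<dots> \<le> \<integral>\<^sup>+ s'. (ennreal \<bar>f s' - f s\<bar> + uacc P pol sg f N s') \<partial>?K"
    proof (rule nn_integral_mono)
      fix s'
      have p1: "?p s' \<le> 1" using hit_le_reach[where N=N and s=s' and P=P and pol=pol and sg=sg] reach[of s'] by simp
      have "ennreal \<bar>f sg - f s\<bar> \<le> ennreal \<bar>f s' - f s\<bar> + ennreal \<bar>f sg - f s'\<bar>"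
        unfolding ennreal_plus[OF abs_ge_zero abs_ge_zero, symmetric] by (rule ennreal_leI) linarith
      then have "ennreal \<bar>f sg - f s\<bar> * ?p s' \<le> (ennreal \<bar>f s' - f s\<bar> + ennreal \<bar>f sg - f s'\<bar>) * ?p s'"
        by (rule mult_right_mono) simp
      also have "\<dots> = ennreal \<bar>f s' - f s\<bar> * ?p s' + ennreal \<bar>f sg - f s'\<bar> * ?p s'"
        by (simp add: distrib_right)
      also have "\<dots> \<le> ennreal \<bar>f s' - f s\<bar> + uacc P pol sg f N s'"
      proof (rule add_mono)
        show "ennreal \<bar>f s' - f s\<bar> * ?p s' \<le> ennreal \<bar>f s' - f s\<bar>"
          using mult_left_mono[OF p1, of "ennreal \<bar>f s' - f s\<bar>"] by simp
      qed (rule Suc.IH)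
      finally show "ennreal \<bar>f sg - f s\<bar> * ?p s' \<le> ennreal \<bar>f s' - f s\<bar> + uacc P pol sg f N s'" .
    qed
    also have "\<dots> = uacc P pol sg f (Suc N) s" using False by simp
    finally show ?thesis .
  qed
qed


definition Rt :: "('s \<Rightarrow> 'a \<Rightarrow> 's \<Rightarrow> 's pmf) \<Rightarrow> ('s \<Rightarrow> 's \<Rightarrow> 'a pmf) \<Rightarrow> 's \<Rightarrow> nat \<Rightarrow> 's \<Rightarrow> ennreal" where
  "Rt P pol sg t s = (\<Sum>n. hit_prob P pol sg (n + Suc t) s)"

lemma R0:
  assumes "reach_prob P pol sg s = 1" "s \<noteq> sg"
  shows "Rt P pol sg 0 s = 1"
proof -
  have "reach_prob P pol sg s = (\<Sum>j. hit_prob P pol sg (j + 1) s) + (\<Sum>j<1. hit_prob P pol sg j s)"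
    unfolding reach_prob_def by (rule suminf_offset) (auto intro: summableI)
  then show ?thesis using assms by (simp add: Rt_def)
qed

lemma Rstep:
  assumes "s \<noteq> sg"
  shows "(\<integral>\<^sup>+ s'. Rt P pol sg t s' \<partial>measure_pmf (step_kernel P pol sg s)) = Rt P pol sg (Suc t) s"
proof -
  have "(\<integral>\<^sup>+ s'. Rt P pol sg t s' \<partial>measure_pmf (step_kernel P pol sg s))
     = (\<Sum>n. \<integral>\<^sup>+ s'. hit_prob P pol sg (n + Suc t) s' \<partial>measure_pmf (step_kernel P pol sg s))"
    unfolding Rt_def by (rule nn_integral_suminf) auto
  also have "\<dots> = (\<Sum>n. hit_prob P pol sg (Suc (n + Suc t)) s)"
    using assms by (simp only: hit_prob.simps(2) if_False)
  also have "\<dots> = Rt P pol sg (Suc t) s"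
    unfolding Rt_def by (simp del: hit_prob.simps)
  finally show ?thesis .
qed

lemma lemB:
  assumes reach: "\<And>s. reach_prob P pol sg s = 1"
    and bnd: "\<And>s. (\<integral>\<^sup>+ s'. ennreal \<bar>f s' - f s\<bar> \<partial>measure_pmf (step_kernel P pol sg s)) \<le> ennreal L"
  shows "uacc P pol sg f N s \<le> ennreal L * (\<Sum>t<N. Rt P pol sg t s)"
proof (induction N arbitrary: s)
  case 0
  then show ?case by simp
next
  case (Suc N)
  show ?case
  proof (cases "s = sg")
    case True
    then show ?thesis by simp
  next
    case False
    let ?K = "measure_pmf (step_kernel P pol sg s)"
    have "uacc P pol sg f (Suc N) s = (\<integral>\<^sup>+ s'. ennreal \<bar>f s' - f s\<bar> \<partial>?K) + (\<integral>\<^sup>+ s'. uacc P pol sg f N s' \<partial>?K)"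
      using False by (simp add: nn_integral_add)
    also have "\<dots> \<le> ennreal L + (\<integral>\<^sup>+ s'. ennreal L * (\<Sum>t<N. Rt P pol sg t s') \<partial>?K)"
      by (intro add_mono bnd nn_integral_mono Suc.IH)
    also have "(\<integral>\<^sup>+ s'. ennreal L * (\<Sum>t<N. Rt P pol sg t s') \<partial>?K) = ennreal L * (\<Sum>t<N. Rt P pol sg (Suc t) s)"
      by (simp add: nn_integral_cmult nn_integral_sum Rstep[OF False])
    also have "ennreal L + ennreal L * (\<Sum>t<N. Rt P pol sg (Suc t) s) = ennreal L * (\<Sum>t<Suc N. Rt P pol sg t s)"
      by (simp only: sum.lessThan_Suc_shift R0[OF reach False] distrib_left mult_1_right)
    finally show ?thesis .
  qed
qed

lemma min_sum: "(\<Sum>t<N. if t < m then h else 0) = of_nat (min N m) * (h::ennreal)"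
  by (induction N) (auto simp: min_def distrib_right)

lemma lemC: "(\<Sum>t<N. Rt P pol sg t s) \<le> (\<Sum>m. of_nat m * hit_prob P pol sg m s)"
proof -
  have eq: "Rt P pol sg t s = (\<Sum>m. if t < m then hit_prob P pol sg m s else 0)" for t
  proof -
    have "(\<Sum>m. if t < m then hit_prob P pol sg m s else 0)
      = (\<Sum>j. (if t < j + Suc t then hit_prob P pol sg (j + Suc t) s else 0)) + (\<Sum>j<Suc t. if t < j then hit_prob P pol sg j s else 0)"
      by (rule suminf_offset) (auto intro: summableI)
    then show ?thesis by (simp add: Rt_def)
  qed
  have "(\<Sum>t<N. Rt P pol sg t s) = (\<Sum>m. \<Sum>t<N. if t < m then hit_prob P pol sg m s else 0)"
    unfolding eq by (rule suminf_sum[symmetric]) (auto intro: summableI)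
  also have "\<dots> \<le> (\<Sum>m. of_nat m * hit_prob P pol sg m s)"
    unfolding min_sum by (intro suminf_le) (auto intro: summableI mult_right_mono)
  finally show ?thesis .
qed

theorem proposition4:
  fixes P :: "'s::countable \<Rightarrow> 'a \<Rightarrow> 's \<Rightarrow> 's pmf"
    and pol :: "'s \<Rightarrow> 's \<Rightarrow> 'a pmf"
    and sg :: 's and f :: "'s \<Rightarrow> real" and L :: real
  assumes reach: "\<And>s. reach_prob P pol sg s = 1"
    and bounded: "(SUP s. \<integral>\<^sup>+ a. (\<integral>\<^sup>+ s'. ennreal \<bar>f s' - f s\<bar> \<partial>measure_pmf (P s a sg))
                       \<partial>measure_pmf (pol s sg)) \<le> ennreal L"
  shows "\<And>s0. ennreal \<bar>f sg - f s0\<bar> \<le> ennreal L * dT P pol s0 sg"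
proof -
  fix s0
  have bnd: "(\<integral>\<^sup>+ s'. ennreal \<bar>f s' - f s\<bar> \<partial>measure_pmf (step_kernel P pol sg s)) \<le> ennreal L" for s
    using order_trans[OF SUP_upper[OF UNIV_I] bounded, of s]
    by (simp add: step_kernel_def)
  let ?D = "\<Sum>m. of_nat m * hit_prob P pol sg m s0"
  have dT: "dT P pol s0 sg = ?D" using reach[of s0] by (simp add: dT_def)
  have N: "ennreal \<bar>f sg - f s0\<bar> * (\<Sum>n<N. hit_prob P pol sg n s0) \<le> ennreal L * ?D" for N
    using order_trans[OF lemA[OF reach] order_trans[OF lemB[OF reach bnd] mult_left_mono[OF lemC]]]
    by simp
  have "ennreal \<bar>f sg - f s0\<bar> = ennreal \<bar>f sg - f s0\<bar> * (SUP N. \<Sum>n<N. hit_prob P pol sg n s0)"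
    using reach[of s0] by (simp add: reach_prob_def suminf_eq_SUP)
  also have "\<dots> = (SUP N. ennreal \<bar>f sg - f s0\<bar> * (\<Sum>n<N. hit_prob P pol sg n s0))"
    by (rule SUP_mult_left_ennreal)
  also have "\<dots> \<le> ennreal L * ?D"
    by (rule SUP_least) (rule N)
  finally show "ennreal \<bar>f sg - f s0\<bar> \<le> ennreal L * dT P pol s0 sg" unfolding dT .
qed

end
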